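(* Let $I$ be a binary, friendship-uniform instance with common friendship value $\phi=\phi_{\min}>1$ whose friendship graph $(N,F^* )$ has maximum degree $1$, and let $A$ be the (random) allocation output by FF-CT-RSD$^*$ on $I$ when all agents report their friendships truthfully and choose plots to maximize their utility. Then $\mathbb E(\mathrm{SW}(A))\ge\frac14\,\mathrm{OPT}(I)$.
   Context: Instance: agents $N$, $n=|N|$ plots $\mathcal V$, undirected plot graph $(\mathcal V,\mathcal E)$, valuations $u_i:\mathcal V\to\{0,1\}$ (binary), reciprocal friendship relation $F$ with $\phi_{i,j}=\phi$ for all $(i,j)\in F$ (friendship-uniform); $F^*=\{\{i,j\}:(i,j)\in F\}$. For an allocation (bijection) $A:N\to\mathcal V$, $U_i(A)=u_i(A(i))+\sum_{(i,j)\in F}\phi\,\mathbb I(\{A(i),A(j)\}\in\mathcal E)$, $\mathrm{SW}(A)=\sum_iU_i(A)$, $\mathrm{OPT}(I)=\max_A\mathrm{SW}(A)$. RSD$^*$: in each iteration, the remaining agents report whether they value some still-available plot positively; if some do, one of them is chosen uniformly at random and picks a plot; otherwise remaining agents are arbitrarily paired with remaining plots and the procedure stops. FF-CT-RSD$^*$: each agent reports a friend (or none); let $P$ be the set of pairs $\{i,j\}$ who report each other. While there exists a pair of adjacent unoccupied plots and $P\ne\emptyset$, a pair $\{i,j\}$ is removed from $P$ uniformly at random and $i$ and $j$ pick plots consecutively (in random order). Once $P=\emptyset$ or no two adjacent plots are unoccupied, RSD$^*$ is run on the remaining agents and plots. Expectation is over the mechanism's randomness. *)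

theory Defs
  imports "HOL-Probability.Probability"
begin

record ('a, 'v) inst =
  agents :: "'a set"
  plots  :: "'v set"
  adj    :: "'v \<Rightarrow> 'v \<Rightarrow> bool"
  val    :: "'a \<Rightarrow> 'v \<Rightarrow> real"
  fr     :: "('a \<times> 'a) set"
  phi    :: real

definition wf_inst :: "('a, 'v) inst \<Rightarrow> bool" where
  "wf_inst I \<longleftrightarrow> finite (agents I) \<and> finite (plots I)
     \<and> card (agents I) = card (plots I)
     \<and> (\<forall>x y. adj I x y \<longrightarrow> adj I y x) \<and> (\<forall>x. \<not> adj I x x)
     \<and> fr I \<subseteq> agents I \<times> agents I
     \<and> (\<forall>i j. (i, j) \<in> fr I \<longrightarrow> (j, i) \<in> fr I)
     \<and> (\<forall>i. (i, i) \<notin> fr I)"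

definition binary :: "('a, 'v) inst \<Rightarrow> bool" where
  "binary I \<longleftrightarrow> (\<forall>i v. val I i v = 0 \<or> val I i v = 1)"

definition max_degree_one :: "('a, 'v) inst \<Rightarrow> bool" where
  "max_degree_one I \<longleftrightarrow> (\<forall>i \<in> agents I. card {j. (i, j) \<in> fr I} \<le> 1)
     \<and> (\<exists>i \<in> agents I. card {j. (i, j) \<in> fr I} = 1)"

definition util :: "('a, 'v) inst \<Rightarrow> ('a \<Rightarrow> 'v) \<Rightarrow> 'a \<Rightarrow> real" where
  "util I A i = val I i (A i)
     + (\<Sum>j \<in> {j. (i, j) \<in> fr I}. phi I * (if adj I (A i) (A j) then 1 else 0))"

definition SW :: "('a, 'v) inst \<Rightarrow> ('a \<Rightarrow> 'v) \<Rightarrow> real" where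
  "SW I A = (\<Sum>i \<in> agents I. util I A i)"

definition allocations :: "('a, 'v) inst \<Rightarrow> ('a \<Rightarrow> 'v) set" where
  "allocations I = {A. bij_betw A (agents I) (plots I)}"

definition OPT :: "('a, 'v) inst \<Rightarrow> real" where
  "OPT I = (MAX A \<in> allocations I. SW I A)"

type_synonym ('a, 'v) hist = "('a \<times> 'v) list"

definition free :: "('a, 'v) inst \<Rightarrow> ('a, 'v) hist \<Rightarrow> 'v set" where
  "free I h = plots I - snd ` set h"

definition placed :: "('a, 'v) hist \<Rightarrow> 'a set" where
  "placed h = fst ` set h"

definition pval :: "('a, 'v) inst \<Rightarrow> ('a, 'v) hist \<Rightarrow> 'a \<Rightarrow> 'v \<Rightarrow> real" where
  "pval I h k v = val I k v
     + phi I * real (card {j. (k, j) \<in> fr I \<and> (\<exists>w. map_of h j = Some w \<and> adj I v w)})"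

definition BR :: "('a, 'v) inst \<Rightarrow> ('a, 'v) hist \<Rightarrow> 'a \<Rightarrow> 'v set" where
  "BR I h k = {v \<in> free I h. \<forall>v' \<in> free I h. pval I h k v' \<le> pval I h k v}"

text \<open>When i picks first within a pair {i,j}, j picks immediately afterwards
  (utility-maximizingly). The value of plot v for i is i's resulting utility,
  evaluated (pessimistically) over j's utility-maximizing responses.\<close>
definition fval :: "('a, 'v) inst \<Rightarrow> ('a, 'v) hist \<Rightarrow> 'a \<Rightarrow> 'a \<Rightarrow> 'v \<Rightarrow> real" where
  "fval I h i j v = (MIN w \<in> BR I (h @ [(i, v)]) j. pval I (h @ [(i, v), (j, w)]) i v)"

definition BR1 :: "('a, 'v) inst \<Rightarrow> ('a, 'v) hist \<Rightarrow> 'a \<Rightarrow> 'a \<Rightarrow> 'v set" where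
  "BR1 I h i j = {v \<in> free I h. \<forall>v' \<in> free I h. fval I h i j v' \<le> fval I h i j v}"

text \<open>Deterministic, history-dependent choice rules:
  pf h i j: plot picked by i when picking first in pair {i,j};
  ps h j:   plot picked by j when picking second in a pair;
  pr h i:   plot picked by i in RSD*;
  comp h:   the arbitrary pairing of remaining agents with remaining plots.\<close>
record ('a, 'v) policy =
  pf   :: "('a, 'v) hist \<Rightarrow> 'a \<Rightarrow> 'a \<Rightarrow> 'v"
  ps   :: "('a, 'v) hist \<Rightarrow> 'a \<Rightarrow> 'v"
  pr   :: "('a, 'v) hist \<Rightarrow> 'a \<Rightarrow> 'v"
  comp :: "('a, 'v) hist \<Rightarrow> 'a \<Rightarrow> 'v"

definition utility_maximizing :: "('a, 'v) inst \<Rightarrow> ('a, 'v) policy \<Rightarrow> bool" where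
  "utility_maximizing I \<pi> \<longleftrightarrow>
     (\<forall>h i j. BR1 I h i j \<noteq> {} \<longrightarrow> pf \<pi> h i j \<in> BR1 I h i j)
   \<and> (\<forall>h j. BR I h j \<noteq> {} \<longrightarrow> ps \<pi> h j \<in> BR I h j)
   \<and> (\<forall>h i. BR I h i \<noteq> {} \<longrightarrow> pr \<pi> h i \<in> BR I h i)
   \<and> (\<forall>h. (\<exists>f. bij_betw f (agents I - placed h) (free I h))
          \<longrightarrow> bij_betw (comp \<pi> h) (agents I - placed h) (free I h))"

text \<open>Truthful friendship report (each agent has at most one friend here).\<close>
definition truthful_report :: "('a, 'v) inst \<Rightarrow> 'a \<Rightarrow> 'a option" where
  "truthful_report I i = (if \<exists>j. (i, j) \<in> fr I then Some (THE j. (i, j) \<in> fr I) else None)"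

definition mutual_pairs :: "('a, 'v) inst \<Rightarrow> ('a \<Rightarrow> 'a option) \<Rightarrow> 'a set set" where
  "mutual_pairs I rep = {{i, j} | i j. i \<in> agents I \<and> j \<in> agents I \<and> i \<noteq> j
                                     \<and> rep i = Some j \<and> rep j = Some i}"

definition complete :: "('a, 'v) policy \<Rightarrow> ('a, 'v) hist \<Rightarrow> 'a \<Rightarrow> 'v" where
  "complete \<pi> h = (\<lambda>i. case map_of h i of Some v \<Rightarrow> v | None \<Rightarrow> comp \<pi> h i)"

definition adj_free_pair :: "('a, 'v) inst \<Rightarrow> ('a, 'v) hist \<Rightarrow> bool" where
  "adj_free_pair I h \<longleftrightarrow> (\<exists>x \<in> free I h. \<exists>y \<in> free I h. adj I x y)"

text \<open>The mechanism run with a fuel bound (card N steps always suffice since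
  every step places at least one agent). The argument P is the set of pairs
  still to be processed; once the RSD* phase starts, P is set to empty.\<close>
fun run :: "('a, 'v) inst \<Rightarrow> ('a, 'v) policy \<Rightarrow> nat \<Rightarrow> ('a, 'v) hist \<Rightarrow> 'a set set
            \<Rightarrow> ('a \<Rightarrow> 'v) pmf" where
  "run I \<pi> 0 h P = return_pmf (complete \<pi> h)"
| "run I \<pi> (Suc n) h P =
    (if adj_free_pair I h \<and> P \<noteq> {} then
       pmf_of_set P \<bind> (\<lambda>p. pmf_of_set p \<bind> (\<lambda>i.
         let j = (THE j. j \<in> p \<and> j \<noteq> i);
             h1 = h @ [(i, pf \<pi> h i j)];
             h2 = h1 @ [(j, ps \<pi> h1 j)]
         in run I \<pi> n h2 (P - {p})))
     else
       (let C = {i \<in> agents I - placed h. \<exists>v \<in> free I h. val I i v > 0} in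
        if C \<noteq> {} then
          pmf_of_set C \<bind> (\<lambda>i. run I \<pi> n (h @ [(i, pr \<pi> h i)]) {})
        else return_pmf (complete \<pi> h)))"

definition FF_CT_RSD :: "('a, 'v) inst \<Rightarrow> ('a \<Rightarrow> 'a option) \<Rightarrow> ('a, 'v) policy \<Rightarrow> ('a \<Rightarrow> 'v) pmf" where
  "FF_CT_RSD I rep \<pi> = run I \<pi> (card (agents I)) [] (mutual_pairs I rep)"

end

theory Submission
  imports Defs
begin

definition Cset :: "('a, 'v) inst \<Rightarrow> ('a, 'v) hist \<Rightarrow> 'a set" where
  "Cset I h = {i \<in> agents I - placed h. \<exists>v \<in> free I h. val I i v > 0}"

definition step2 where
  "step2 \<pi> h p i = (let j = (THE j. j \<in> p \<and> j \<noteq> i);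
             h1 = h @ [(i, pf \<pi> h i j)] in h1 @ [(j, ps \<pi> h1 j)])"

lemma run_pair: "adj_free_pair I h \<and> P \<noteq> {} \<Longrightarrow>
  run I \<pi> (Suc n) h P = pmf_of_set P \<bind> (\<lambda>p. pmf_of_set p \<bind> (\<lambda>i. run I \<pi> n (step2 \<pi> h p i) (P - {p})))"
  by (simp add: step2_def Let_def)

lemma run_rsd: "\<not> (adj_free_pair I h \<and> P \<noteq> {}) \<Longrightarrow> Cset I h \<noteq> {} \<Longrightarrow>
  run I \<pi> (Suc n) h P = pmf_of_set (Cset I h) \<bind> (\<lambda>i. run I \<pi> n (h @ [(i, pr \<pi> h i)]) {})"
  by (simp only: run.simps if_False Let_def Cset_def) simp

lemma run_stop: "\<not> (adj_free_pair I h \<and> P \<noteq> {}) \<Longrightarrow> Cset I h = {} \<Longrightarrow>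
  run I \<pi> (Suc n) h P = return_pmf (Defs.complete \<pi> h)"
  by (simp only: run.simps if_False Let_def Cset_def) simp

declare run.simps(2)[simp del]

lemma run_keeps:
  "A \<in> set_pmf (run I \<pi> n h P) \<Longrightarrow> map_of h x = Some v \<Longrightarrow> A x = v"
proof (induction n arbitrary: h P)
  case 0
  then show ?case by (simp add: complete_def)
next
  case (Suc n)
  show ?case
  proof (cases "adj_free_pair I h \<and> P \<noteq> {}")
    case True
    from Suc.prems(1) obtain p i where "A \<in> set_pmf (run I \<pi> n (step2 \<pi> h p i) (P - {p}))"
      unfolding run_pair[OF True] by auto
    then show ?thesis using Suc.IH Suc.prems(2) by (auto simp: map_add_def step2_def Let_def split: option.splits)
  next
    case False
    show ?thesis
    proof (cases "Cset I h = {}")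
      case True
      then show ?thesis using Suc.prems unfolding run_stop[OF False True] by (simp add: complete_def)
    next
      case C: False
      from Suc.prems(1) obtain i where "A \<in> set_pmf (run I \<pi> n (h @ [(i, pr \<pi> h i)]) {})"
        unfolding run_rsd[OF False C] by auto
      then show ?thesis using Suc.IH Suc.prems(2) by (auto simp: map_add_def split: option.splits)
    qed
  qed
qed

locale Sctx =
  fixes I :: "('a,'v) inst" and \<pi> :: "('a,'v) policy"
  assumes wf: "wf_inst I" and bin: "binary I" and phi1: "phi I > 1"
   and deg: "\<forall>i\<in>agents I. card {j. (i,j) \<in> fr I} \<le> 1"
   and um: "utility_maximizing I \<pi>"
begin

lemma fin_agents: "finite (agents I)" and fin_plots: "finite (plots I)"
  and adj_sym: "adj I x y \<Longrightarrow> adj I y x" and adj_irr: "\<not> adj I x x"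
  and fr_sub: "fr I \<subseteq> agents I \<times> agents I"
  and fr_sym: "(i,j) \<in> fr I \<Longrightarrow> (j,i) \<in> fr I" and fr_irr: "(i,i) \<notin> fr I"
  using wf unfolding wf_inst_def by auto

lemma val01: "val I x v = 0 \<or> val I x v = 1"
  using bin unfolding binary_def by blast

lemma val_nn: "0 \<le> val I x v" using val01[of x v] by auto
lemma val_le1: "val I x v \<le> 1" using val01[of x v] by auto

lemma fin_friends: "finite {j. (i,j) \<in> fr I}"
proof -
  have "{j. (i,j) \<in> fr I} \<subseteq> agents I" using fr_sub by auto
  then show ?thesis using fin_agents finite_subset by blast
qed

lemma fr_uniq: "(x,y) \<in> fr I \<Longrightarrow> (x,z) \<in> fr I \<Longrightarrow> y = z"
proof -
  assume a: "(x,y) \<in> fr I" "(x,z) \<in> fr I"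
  then have "x \<in> agents I" using fr_sub by auto
  then have "card {j. (x,j) \<in> fr I} \<le> 1" using deg by auto
  then have "\<forall>a1\<in>{j. (x,j) \<in> fr I}. \<forall>a2\<in>{j. (x,j) \<in> fr I}. a1 = a2"
    using card_le_Suc0_iff_eq[OF fin_friends] by simp
  with a show "y = z" by blast
qed

lemma friends_eq: "(x,y) \<in> fr I \<Longrightarrow> {j. (x,j) \<in> fr I} = {y}"
  using fr_uniq by auto

lemma fin_free: "finite (free I h)"
  unfolding free_def using fin_plots by auto

lemma free_app[simp]: "free I (h @ ys) = free I h - snd ` set ys"
  unfolding free_def by auto

lemma placed_app[simp]: "placed (h @ ys) = placed h \<union> fst ` set ys"
  unfolding placed_def by auto

lemma map_of_new: "x \<notin> placed h \<Longrightarrow> map_of (h @ ys) x = map_of ys x"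
proof -
  assume "x \<notin> placed h"
  then have "map_of h x = None" by (simp add: map_of_eq_None_iff placed_def)
  then show ?thesis by (simp add: map_add_def)
qed

lemma map_of_None: "x \<notin> placed h \<Longrightarrow> map_of h x = None"
  by (simp add: map_of_eq_None_iff placed_def)

lemma pval_single:
  assumes "{j. (k,j) \<in> fr I} = {m}" "map_of h m = Some z"
  shows "pval I h k u = val I k u + phi I * (if adj I u z then 1 else 0)"
proof -
  have "{j. (k, j) \<in> fr I \<and> (\<exists>w. map_of h j = Some w \<and> adj I u w)} = (if adj I u z then {m} else {})"
  proof -
    from assms(1) have fk: "(k,j) \<in> fr I \<longleftrightarrow> j = m" for j by blast
    show ?thesis using assms(2) by (auto simp: fk)
  qed
  then show ?thesis unfolding pval_def by simp
qed

lemma argmax_ex: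
  fixes f :: "'b \<Rightarrow> real"
  assumes "finite S" "S \<noteq> {}" shows "\<exists>v\<in>S. \<forall>v'\<in>S. f v' \<le> f v"
proof -
  have "Max (f ` S) \<in> f ` S" using assms by auto
  then obtain v where "v \<in> S" "f v = Max (f ` S)" by auto
  moreover have "f v' \<le> Max (f ` S)" if "v' \<in> S" for v' using that assms(1) by (metis Max_ge finite_imageI imageI)
  ultimately show ?thesis by metis
qed

lemma BR_ne: "free I h \<noteq> {} \<Longrightarrow> BR I h k \<noteq> {}"
  using argmax_ex[OF fin_free, of h "pval I h k"] unfolding BR_def by auto

lemma BR_sub: "BR I h k \<subseteq> free I h" unfolding BR_def by auto

lemma BR1_ne: "free I h \<noteq> {} \<Longrightarrow> BR1 I h i j \<noteq> {}"
  using argmax_ex[OF fin_free, of h "fval I h i j"] unfolding BR1_def by auto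

lemma phi_pos: "phi I > 0" using phi1 by simp

lemma pair_adj:
  assumes afp: "adj_free_pair I h" and ip: "i \<notin> placed h" and jp: "j \<notin> placed h" and ij: "i \<noteq> j"
    and fi: "{k. (i,k) \<in> fr I} = {j}" and fj: "{k. (j,k) \<in> fr I} = {i}"
  shows "adj I (pf \<pi> h i j) (ps \<pi> (h @ [(i, pf \<pi> h i j)]) j)"
proof -
  have mi: "map_of (h @ [(i,x)]) i = Some x" for x using map_of_None[OF ip] by (simp add: map_add_def)
  have mj: "map_of (h @ [(i,x), (j,w')]) j = Some w'" for x w' using map_of_None[OF jp] ij by (simp add: map_add_def)
  have pj: "pval I (h @ [(i,x)]) j u = val I j u + phi I * (if adj I u x then 1 else 0)" for x u
    using pval_single[OF fj mi] .
  have pi: "pval I (h @ [(i,x), (j,w')]) i x = val I i x + phi I * (if adj I x w' then 1 else 0)" for x w'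
    using pval_single[OF fi mj] .
  have L1: "adj I x w'" if y: "y \<in> free I (h @ [(i,x)])" "adj I x y" and w: "w' \<in> BR I (h @ [(i,x)]) j" for x y w'
  proof (rule ccontr)
    assume na: "\<not> adj I x w'"
    have "pval I (h @ [(i,x)]) j y \<le> pval I (h @ [(i,x)]) j w'" using w y unfolding BR_def by auto
    moreover have "\<not> adj I w' x" "adj I y x" using na y(2) adj_sym by blast+
    ultimately have "val I j y + phi I \<le> val I j w'" using pj by simp
    then show False using val_nn[of j y] val_le1[of j w'] phi1 by linarith
  qed
  have fvaldef: "fval I h i j x = Min ((\<lambda>w'. val I i x + phi I * (if adj I x w' then 1 else 0)) ` BR I (h @ [(i,x)]) j)" for x
    unfolding fval_def using pi by simp
  have finBR: "finite (BR I h' k)" for h' k using BR_sub fin_free finite_subset by metis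
  from afp obtain x y where xy: "x \<in> free I h" "y \<in> free I h" "adj I x y" unfolding adj_free_pair_def by auto
  have yx: "y \<noteq> x" using xy adj_irr by auto
  have "free I (h @ [(i,x)]) \<noteq> {}" using xy yx by auto
  then have bx: "BR I (h @ [(i,x)]) j \<noteq> {}" by (rule BR_ne)
  have fx: "fval I h i j x \<ge> phi I"
    unfolding fvaldef
  proof (subst Min_ge_iff)
    show "finite ((\<lambda>w'. val I i x + phi I * (if adj I x w' then 1 else 0)) ` BR I (h @ [(i,x)]) j)" using finBR by auto
    show "(\<lambda>w'. val I i x + phi I * (if adj I x w' then 1 else 0)) ` BR I (h @ [(i,x)]) j \<noteq> {}" using bx by auto
    show "\<forall>a\<in>(\<lambda>w'. val I i x + phi I * (if adj I x w' then 1 else 0)) ` BR I (h @ [(i,x)]) j. phi I \<le> a"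
      using L1[of y x] xy yx val_nn[of i x] by auto
  qed
  define v where "v = pf \<pi> h i j"
  have "BR1 I h i j \<noteq> {}" using BR1_ne xy by auto
  then have v1: "v \<in> BR1 I h i j" using um unfolding utility_maximizing_def v_def by auto
  then have vfree: "v \<in> free I h" and fv: "fval I h i j v \<ge> phi I" using fx xy unfolding BR1_def by auto
  have fne: "free I (h @ [(i,v)]) \<noteq> {}" using xy yx by auto
  have bv: "BR I (h @ [(i,v)]) j \<noteq> {}" using BR_ne[OF fne] .
  have "\<exists>y'\<in>free I (h @ [(i,v)]). adj I v y'"
  proof (rule ccontr)
    assume "\<not> ?thesis"
    then have nadj: "\<forall>w'\<in>BR I (h @ [(i,v)]) j. \<not> adj I v w'" using BR_sub by blast
    from bv obtain w0 where w0: "w0 \<in> BR I (h @ [(i,v)]) j" by auto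
    have "fval I h i j v \<le> val I i v + phi I * (if adj I v w0 then 1 else 0)"
      unfolding fvaldef using finBR w0 by (intro Min_le) auto
    then have "fval I h i j v \<le> val I i v" using nadj w0 by auto
    then show False using fv val_le1[of i v] phi1 by linarith
  qed
  then obtain y' where y': "y' \<in> free I (h @ [(i,v)])" "adj I v y'" by auto
  have "ps \<pi> (h @ [(i,v)]) j \<in> BR I (h @ [(i,v)]) j" using um bv unfolding utility_maximizing_def by auto
  then show ?thesis using L1[OF y'] unfolding v_def by simp
qed

end

definition alive :: "('a,'v) inst \<Rightarrow> ('a \<Rightarrow> 'v) \<Rightarrow> ('a,'v) hist \<Rightarrow> 'a set" where
  "alive I As h = {x \<in> agents I - placed h. As x \<in> free I h}"
definition VA :: "('a,'v) inst \<Rightarrow> ('a \<Rightarrow> 'v) \<Rightarrow> ('a,'v) hist \<Rightarrow> real" where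
  "VA I As h = (\<Sum>x\<in>alive I As h. val I x (As x))"
definition BPs :: "('a,'v) inst \<Rightarrow> ('a \<Rightarrow> 'v) \<Rightarrow> ('a \<times> 'a) set" where
  "BPs I As = {(x,y) \<in> fr I. adj I (As x) (As y)}"
definition BA :: "('a,'v) inst \<Rightarrow> ('a \<Rightarrow> 'v) \<Rightarrow> ('a,'v) hist \<Rightarrow> nat" where
  "BA I As h = card {(x,y) \<in> BPs I As. x \<notin> placed h \<and> y \<notin> placed h}"
definition BPc :: "('a,'v) inst \<Rightarrow> ('a \<Rightarrow> 'v) \<Rightarrow> ('a,'v) hist \<Rightarrow> nat" where
  "BPc I As h = card {(x,y) \<in> BPs I As. As x \<in> free I h \<and> As y \<in> free I h}"
definition Pot :: "('a,'v) inst \<Rightarrow> ('a \<Rightarrow> 'v) \<Rightarrow> ('a,'v) hist \<Rightarrow> real" where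
  "Pot I As h = VA I As h + phi I * real (min (BA I As h) (BPc I As h))"

locale Sopt = Sctx +
  fixes As :: "'a \<Rightarrow> 'v"
  assumes As_inj: "inj_on As (agents I)" and As_rng: "As ` agents I \<subseteq> plots I"
begin

lemma fin_fr: "finite (fr I)"
  using fr_sub fin_agents by (meson finite_SigmaI finite_subset)

lemma card_split: "finite A \<Longrightarrow> B \<subseteq> A \<Longrightarrow> card A \<le> card B + card (A - B)"
proof -
  assume a: "finite A" "B \<subseteq> A"
  then have fB: "finite B" using finite_subset by blast
  have "card (A - B) = card A - card B" using card_Diff_subset[OF fB a(2)] .
  moreover have "card B \<le> card A" using card_mono a by blast
  ultimately show ?thesis by linarith
qed

lemma card_pre: "card {x \<in> agents I. As x \<in> T} \<le> card (T \<inter> plots I)"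
proof (rule card_inj_on_le)
  show "inj_on As {x \<in> agents I. As x \<in> T}" using As_inj by (rule inj_on_subset) auto
  show "As ` {x \<in> agents I. As x \<in> T} \<subseteq> T \<inter> plots I" using As_rng by auto
  show "finite (T \<inter> plots I)" using fin_plots by auto
qed

lemma card_pre2: "card {x \<in> agents I. As x \<in> snd ` set ys} \<le> length ys"
proof -
  have "card (snd ` set ys \<inter> plots I) \<le> card (snd ` set ys)" by (rule card_mono) auto
  also have "\<dots> \<le> length ys" using card_image_le card_length order_trans by blast
  finally show ?thesis using card_pre[of "snd ` set ys"] by linarith
qed

lemma VA_drop: "VA I As h \<le> VA I As (h @ ys) + 2 * real (length ys)"
proof -
  let ?D = "alive I As h - alive I As (h @ ys)"
  have sub: "alive I As (h @ ys) \<subseteq> alive I As h" unfolding alive_def by auto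
  have fin: "finite (alive I As h)" unfolding alive_def using fin_agents by auto
  have "VA I As h = VA I As (h @ ys) + (\<Sum>x\<in>?D. val I x (As x))"
    unfolding VA_def using sum.subset_diff[OF sub fin, of "\<lambda>x. val I x (As x)"] by (simp add: add.commute)
  moreover have "(\<Sum>x\<in>?D. val I x (As x)) \<le> real (card ?D) * 1"
    by (rule sum_bounded_above) (use val_le1 in auto)
  moreover have "?D \<subseteq> fst ` set ys \<union> {x \<in> agents I. As x \<in> snd ` set ys}"
    unfolding alive_def by auto
  then have "card ?D \<le> card (fst ` set ys) + card {x \<in> agents I. As x \<in> snd ` set ys}"
  proof -
    assume dsub: "?D \<subseteq> fst ` set ys \<union> {x \<in> agents I. As x \<in> snd ` set ys}"
    have "finite (fst ` set ys \<union> {x \<in> agents I. As x \<in> snd ` set ys})" using fin_agents by auto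
    then have "card ?D \<le> card (fst ` set ys \<union> {x \<in> agents I. As x \<in> snd ` set ys})"
      using dsub card_mono by blast
    also have "\<dots> \<le> card (fst ` set ys) + card {x \<in> agents I. As x \<in> snd ` set ys}" by (rule card_Un_le)
    finally show ?thesis .
  qed
  moreover have "card (fst ` set ys) \<le> length ys" using card_image_le card_length order_trans by blast
  ultimately show ?thesis using card_pre2[of ys] by linarith
qed

lemma fin_BPs: "finite (BPs I As)" unfolding BPs_def using fin_fr by (rule finite_subset[rotated]) auto

lemma BA_mono: "BA I As (h @ ys) \<le> BA I As h"
  unfolding BA_def by (rule card_mono[OF finite_subset[OF _ fin_BPs]]) auto

lemma BPc_mono: "BPc I As (h @ ys) \<le> BPc I As h"
  unfolding BPc_def by (rule card_mono[OF finite_subset[OF _ fin_BPs]]) auto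

lemma BA_drop:
  assumes "(i,j) \<in> fr I" "fst ` set ys = {i,j}"
  shows "BA I As h \<le> BA I As (h @ ys) + 2"
proof -
  define A where "A = {(x,y) \<in> BPs I As. x \<notin> placed h \<and> y \<notin> placed h}"
  define B where "B = {(x,y) \<in> BPs I As. x \<notin> placed (h@ys) \<and> y \<notin> placed (h@ys)}"
  have fA: "finite A" unfolding A_def by (rule finite_subset[OF _ fin_BPs]) auto
  have "B \<subseteq> A" unfolding A_def B_def by auto
  then have c1: "card A \<le> card B + card (A - B)" using card_split fA by blast
  have sub: "A - B \<subseteq> {(i,j),(j,i)}"
  proof
    fix z assume z: "z \<in> A - B"
    then obtain x y where zxy: "z = (x,y)" and xy: "(x,y) \<in> fr I" "x \<in> {i,j} \<or> y \<in> {i,j}"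
      using assms(2) unfolding BPs_def A_def B_def by auto
    have ji: "(j,i) \<in> fr I" using fr_sym assms(1) by blast
    have yx: "(y,x) \<in> fr I" using fr_sym xy(1) by blast
    from xy(2) show "z \<in> {(i,j),(j,i)}"
      using fr_uniq[OF xy(1)] fr_uniq[OF yx] assms(1) ji zxy by blast
  qed
  have "card (A - B) \<le> card {(i,j),(j,i)}" using sub by (intro card_mono) simp_all
  moreover have "card {(i,j),(j,i)} \<le> (2::nat)"
    using card_length[of "[(i,j),(j,i)]"] by (simp del: card.insert)
  ultimately have "card (A - B) \<le> 2" by linarith
  then show ?thesis unfolding BA_def A_def[symmetric] B_def[symmetric] using c1 by linarith
qed

end

context Sopt begin

lemma BPc_drop: "BPc I As h \<le> BPc I As (h @ ys) + 2 * length ys"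
proof -
  define A where "A = {(x,y) \<in> BPs I As. As x \<in> free I h \<and> As y \<in> free I h}"
  define B where "B = {(x,y) \<in> BPs I As. As x \<in> free I (h@ys) \<and> As y \<in> free I (h@ys)}"
  define Q where "Q = {x \<in> agents I. As x \<in> snd ` set ys}"
  define X where "X = {z \<in> fr I. fst z \<in> Q}"
  define Y where "Y = {z \<in> fr I. snd z \<in> Q}"
  have fA: "finite A" unfolding A_def by (rule finite_subset[OF _ fin_BPs]) auto
  have "B \<subseteq> A" unfolding A_def B_def by auto
  then have c1: "card A \<le> card B + card (A - B)" using card_split fA by blast
  have sub: "A - B \<subseteq> X \<union> Y"
  proof
    fix z assume z: "z \<in> A - B"
    obtain x y where zxy: "z = (x,y)" by (cases z)
    with z have "(x,y) \<in> fr I" "As x \<in> snd ` set ys \<or> As y \<in> snd ` set ys"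
      unfolding A_def B_def BPs_def by auto
    moreover then have "x \<in> agents I" "y \<in> agents I" using fr_sub by auto
    ultimately show "z \<in> X \<union> Y" unfolding X_def Y_def Q_def zxy by auto
  qed
  have fQ: "finite Q" unfolding Q_def using fin_agents by auto
  have cX: "card X \<le> card Q"
  proof (rule card_inj_on_le[OF _ _ fQ])
    show "inj_on fst X"
    proof (rule inj_onI)
      fix a b assume "a \<in> X" "b \<in> X" "fst a = fst b"
      moreover obtain x y where "a = (x,y)" by (cases a)
      moreover obtain x' y' where "b = (x',y')" by (cases b)
      ultimately show "a = b" unfolding X_def using fr_uniq[of x y y'] by auto
    qed
    show "fst ` X \<subseteq> Q" unfolding X_def by auto
  qed
  have cY: "card Y \<le> card Q"
  proof (rule card_inj_on_le[OF _ _ fQ])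
    show "inj_on snd Y"
    proof (rule inj_onI)
      fix a b assume "a \<in> Y" "b \<in> Y" "snd a = snd b"
      moreover obtain x y where "a = (x,y)" by (cases a)
      moreover obtain x' y' where "b = (x',y')" by (cases b)
      ultimately show "a = b" unfolding Y_def using fr_uniq[of y x x'] fr_sym[of x y] fr_sym[of x' y'] by auto
    qed
    show "snd ` Y \<subseteq> Q" unfolding Y_def by auto
  qed
  have fXY: "finite (X \<union> Y)" unfolding X_def Y_def using fin_fr by auto
  have "card (A - B) \<le> card (X \<union> Y)" using card_mono[OF fXY sub] .
  also have "\<dots> \<le> card X + card Y" by (rule card_Un_le)
  finally have "card (A - B) \<le> 2 * length ys" using cX cY card_pre2[of ys] unfolding Q_def by linarith
  then show ?thesis unfolding BPc_def A_def[symmetric] B_def[symmetric] using c1 by linarith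
qed

lemma util_nn: "0 \<le> util I A i"
  unfolding util_def using val_nn phi_pos by (intro add_nonneg_nonneg sum_nonneg) auto

lemma util_friend: "{k. (i,k) \<in> fr I} = {j} \<Longrightarrow> adj I (A i) (A j) \<Longrightarrow> phi I \<le> util I A i"
  unfolding util_def using val_nn[of i "A i"] by simp

lemma util_pval:
  assumes agree: "\<And>k w. map_of h k = Some w \<Longrightarrow> A k = w" and Ai: "A i = v"
  shows "pval I h i v \<le> util I A i"
proof -
  define S where "S = {k. (i, k) \<in> fr I \<and> (\<exists>w. map_of h k = Some w \<and> adj I v w)}"
  define F where "F = {k. (i,k) \<in> fr I}"
  have SF: "S \<subseteq> F" unfolding S_def F_def by auto
  have fF: "finite F" unfolding F_def by (rule fin_friends)
  have "(\<Sum>k\<in>S. phi I * (if adj I (A i) (A k) then 1 else 0)) = (\<Sum>k\<in>S. phi I)"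
  proof (rule sum.cong)
    fix k assume "k \<in> S"
    then obtain w where "map_of h k = Some w" "adj I v w" unfolding S_def by auto
    then show "phi I * (if adj I (A i) (A k) then 1 else 0) = phi I" using agree Ai by auto
  qed simp
  then have "phi I * real (card S) = (\<Sum>k\<in>S. phi I * (if adj I (A i) (A k) then 1 else 0))"
    by (simp add: mult.commute)
  also have "\<dots> \<le> (\<Sum>k\<in>F. phi I * (if adj I (A i) (A k) then 1 else 0))"
    by (rule sum_mono2[OF fF SF]) (use phi_pos in auto)
  finally show ?thesis unfolding pval_def util_def S_def[symmetric] F_def[symmetric] using Ai by simp
qed

end

definition Inv :: "('a,'v) inst \<Rightarrow> ('a \<Rightarrow> 'v) \<Rightarrow> nat \<Rightarrow> ('a,'v) hist \<Rightarrow> 'a set set \<Rightarrow> bool" where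
  "Inv I As n h P \<longleftrightarrow> placed h \<subseteq> agents I \<and> card (agents I) \<le> card (placed h) + n
    \<and> (\<forall>p\<in>P. \<exists>a b. p = {a,b} \<and> (a,b) \<in> fr I \<and> a \<notin> placed h \<and> b \<notin> placed h)
    \<and> ((\<forall>x y. (x,y) \<in> fr I \<longrightarrow> x \<notin> placed h \<longrightarrow> {x,y} \<in> P) \<or> min (BA I As h) (BPc I As h) = 0)"

context Sopt begin

lemma fin_placed: "finite (placed h)" unfolding placed_def by simp

lemma else_min0:
  assumes inv: "Inv I As n h P" and nc: "\<not> (adj_free_pair I h \<and> P \<noteq> {})"
  shows "min (BA I As h) (BPc I As h) = 0"
proof (cases "adj_free_pair I h")
  case False
  have E: "{(x,y) \<in> BPs I As. As x \<in> free I h \<and> As y \<in> free I h} = {}"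
    using False unfolding adj_free_pair_def BPs_def by auto
  show ?thesis unfolding BPc_def E by simp
next
  case True
  then have P0: "P = {}" using nc by simp
  from inv have "(\<forall>x y. (x,y) \<in> fr I \<longrightarrow> x \<notin> placed h \<longrightarrow> {x,y} \<in> P) \<or> min (BA I As h) (BPc I As h) = 0"
    unfolding Inv_def by (elim conjE)
  then show ?thesis
  proof
    assume a: "\<forall>x y. (x,y) \<in> fr I \<longrightarrow> x \<notin> placed h \<longrightarrow> {x,y} \<in> P"
    have E: "{(x,y) \<in> BPs I As. x \<notin> placed h \<and> y \<notin> placed h} = {}"
    proof (rule equals0I)
      fix z assume z: "z \<in> {(x,y) \<in> BPs I As. x \<notin> placed h \<and> y \<notin> placed h}"
      obtain x y where zxy: "z = (x,y)" by (cases z)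
      with z have "(x,y) \<in> fr I" "x \<notin> placed h" unfolding BPs_def by auto
      then have "{x,y} \<in> P" using a by blast
      then show False using P0 by simp
    qed
    show ?thesis unfolding BA_def E by simp
  qed
qed

lemma Pot_stop:
  assumes m0: "min (BA I As h) (BPc I As h) = 0" and c: "Cset I h = {}"
  shows "Pot I As h \<le> 0"
proof -
  have "VA I As h \<le> 0" unfolding VA_def
  proof (rule sum_nonpos)
    fix x assume x: "x \<in> alive I As h"
    then have xa: "x \<in> agents I - placed h" unfolding alive_def by auto
    have "\<not> (\<exists>v\<in>free I h. 0 < val I x v)"
    proof
      assume "\<exists>v\<in>free I h. 0 < val I x v"
      then have "x \<in> Cset I h" using xa unfolding Cset_def by blast
      then show False using c by simp
    qed
    then have "\<forall>v\<in>free I h. \<not> 0 < val I x v" by blast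
    then show "val I x (As x) \<le> 0" using x unfolding alive_def by (simp add: not_less)
  qed
  then show ?thesis unfolding Pot_def using m0 by simp
qed

lemma Pot_fuel0:
  assumes inv: "Inv I As 0 h P"
  shows "Pot I As h \<le> 0"
proof -
  from inv have sub: "placed h \<subseteq> agents I" and c: "card (agents I) \<le> card (placed h)"
    unfolding Inv_def by auto
  have "card (placed h) \<le> card (agents I)" using card_mono[OF fin_agents sub] .
  then have eq: "placed h = agents I" using card_subset_eq[OF fin_agents sub] c by linarith
  have "alive I As h = {}" unfolding alive_def eq by auto
  then have "VA I As h = 0" unfolding VA_def by simp
  moreover have E: "{(x,y) \<in> BPs I As. x \<notin> placed h \<and> y \<notin> placed h} = {}"
    unfolding BPs_def eq using fr_sub by auto
  have "BA I As h = 0" unfolding BA_def E by simp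
  ultimately show ?thesis unfolding Pot_def by simp
qed

lemma Pot_ge_VA: "VA I As h \<le> Pot I As h"
  unfolding Pot_def using phi_pos by simp

lemma agree_app: "map_of h k = Some w \<Longrightarrow> map_of (h @ ys) k = Some w"
  by (simp add: map_add_def)

lemma min_drop: "(a::nat) \<le> a' + 4 \<Longrightarrow> b \<le> b' + 4 \<Longrightarrow> min a b \<le> min a' b' + 4"
  by linarith

lemma pair_facts:
  assumes p: "p = {a,b}" "(a,b) \<in> fr I" and i: "i \<in> p"
  shows "\<exists>j. (THE j. j \<in> p \<and> j \<noteq> i) = j \<and> p = {i,j} \<and> i \<noteq> j \<and> (i,j) \<in> fr I"
proof -
  have ab: "a \<noteq> b" using p fr_irr by auto
  show ?thesis
  proof (cases "i = a")
    case True
    have "(THE j. j \<in> p \<and> j \<noteq> i) = b" using ab True p by (intro the_equality) auto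
    then show ?thesis using True p ab by auto
  next
    case False
    then have ib: "i = b" using i p by auto
    have "(THE j. j \<in> p \<and> j \<noteq> i) = a" using ab ib p by (intro the_equality) auto
    then show ?thesis using ib p ab fr_sym by auto
  qed
qed

lemma main:
  "Inv I As n h P \<Longrightarrow> A \<in> set_pmf (run I \<pi> n h P) \<Longrightarrow>
     Pot I As h \<le> 4 * (\<Sum>i\<in>agents I - placed h. util I A i)"
proof (induction n arbitrary: h P)
  case 0
  have "Pot I As h \<le> 0" using Pot_fuel0 0 by blast
  moreover have "0 \<le> (\<Sum>i\<in>agents I - placed h. util I A i)" by (intro sum_nonneg util_nn)
  ultimately show ?case by linarith
next
  case (Suc n)
  note inv = Suc.prems(1)
  have invd: "placed h \<subseteq> agents I \<and> card (agents I) \<le> card (placed h) + Suc n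
    \<and> (\<forall>p\<in>P. \<exists>a b. p = {a,b} \<and> (a,b) \<in> fr I \<and> a \<notin> placed h \<and> b \<notin> placed h)
    \<and> ((\<forall>x y. (x,y) \<in> fr I \<longrightarrow> x \<notin> placed h \<longrightarrow> {x,y} \<in> P) \<or> min (BA I As h) (BPc I As h) = 0)"
    using inv unfolding Inv_def .
  note inv1 = conjunct1[OF invd]
  note inv2 = conjunct1[OF conjunct2[OF invd]]
  note inv3 = conjunct1[OF conjunct2[OF conjunct2[OF invd]]]
  note inv4 = conjunct2[OF conjunct2[OF conjunct2[OF invd]]]
  have sum_nn: "0 \<le> (\<Sum>i\<in>X. util I A i)" for X by (intro sum_nonneg util_nn)
  show ?case
  proof (cases "adj_free_pair I h \<and> P \<noteq> {}")
    case True
    have PPow: "P \<subseteq> Pow (agents I)"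
    proof
      fix q assume "q \<in> P"
      then obtain c d where "q = {c,d}" "(c,d) \<in> fr I" using inv3 by blast
      then show "q \<in> Pow (agents I)" using fr_sub by auto
    qed
    have fP: "finite P" using finite_subset[OF PPow] fin_agents by simp
    from Suc.prems(2) obtain p i where pP: "p \<in> P" and ip: "i \<in> set_pmf (pmf_of_set p)"
      and A2: "A \<in> set_pmf (run I \<pi> n (step2 \<pi> h p i) (P - {p}))"
      unfolding run_pair[OF True] using set_pmf_of_set[OF _ fP] True by auto
    from inv3 pP obtain a b where p: "p = {a,b}" "(a,b) \<in> fr I" "a \<notin> placed h" "b \<notin> placed h" by blast
    have "set_pmf (pmf_of_set p) = p" using p by (intro set_pmf_of_set) auto
    then have ipp: "i \<in> p" using ip by simp
    from pair_facts[OF p(1,2) ipp] obtain j where jt: "(THE j. j \<in> p \<and> j \<noteq> i) = j"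
      and pij: "p = {i,j}" and ij: "i \<noteq> j" and fij: "(i,j) \<in> fr I" by blast
    have iph: "i \<notin> placed h" and jph: "j \<notin> placed h" using p pij by auto
    have fji: "(j,i) \<in> fr I" using fr_sym fij by blast
    have Fi: "{k. (i,k) \<in> fr I} = {j}" using friends_eq fij by blast
    have Fj: "{k. (j,k) \<in> fr I} = {i}" using friends_eq fji by blast
    define v where "v = pf \<pi> h i j"
    define w where "w = ps \<pi> (h @ [(i,v)]) j"
    define h2 where "h2 = h @ [(i,v),(j,w)]"
    have st: "step2 \<pi> h p i = h2" unfolding step2_def h2_def v_def w_def Let_def jt by simp
    have vw: "adj I v w" unfolding v_def w_def using pair_adj[OF _ iph jph ij Fi Fj] True by blast
    have A2': "A \<in> set_pmf (run I \<pi> n h2 (P - {p}))" using A2 st by simp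
    have ph2: "placed h2 = insert i (insert j (placed h))" unfolding h2_def by auto
    have ia: "i \<in> agents I" "j \<in> agents I" using fij fr_sub by auto
    have invn: "Inv I As n h2 (P - {p})"
      unfolding Inv_def
    proof (intro conjI)
      show "placed h2 \<subseteq> agents I" using ph2 inv1 ia by auto
      have "card (insert i (placed h)) = Suc (card (placed h))" by (rule card_insert_disjoint[OF fin_placed iph])
      moreover have "card (insert i (placed h)) \<le> card (placed h2)"
        using ph2 fin_placed by (intro card_mono) auto
      ultimately show "card (agents I) \<le> card (placed h2) + n" using inv2 by linarith
      show "\<forall>q\<in>P - {p}. \<exists>c d. q = {c,d} \<and> (c,d) \<in> fr I \<and> c \<notin> placed h2 \<and> d \<notin> placed h2"
      proof
        fix q assume q: "q \<in> P - {p}"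
        then obtain c d where cd: "q = {c,d}" "(c,d) \<in> fr I" "c \<notin> placed h" "d \<notin> placed h"
          using inv3 by blast
        have dc: "(d,c) \<in> fr I" using fr_sym cd(2) by blast
        have qp: "q \<noteq> p" using q by simp
        have "c \<noteq> i"
        proof
          assume "c = i"
          then have "d = j" using fr_uniq[OF fij, of d] cd(2) by simp
          then show False using qp cd(1) pij \<open>c = i\<close> by simp
        qed
        moreover have "c \<noteq> j"
        proof
          assume "c = j"
          then have "d = i" using fr_uniq[OF fji, of d] cd(2) by simp
          then show False using qp cd(1) pij \<open>c = j\<close> by (simp add: insert_commute)
        qed
        moreover have "d \<noteq> i"
        proof
          assume "d = i"
          then have "c = j" using fr_uniq[OF fij, of c] dc by simp
          then show False using qp cd(1) pij \<open>d = i\<close> by (simp add: insert_commute)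
        qed
        moreover have "d \<noteq> j"
        proof
          assume "d = j"
          then have "c = i" using fr_uniq[OF fji, of c] dc by simp
          then show False using qp cd(1) pij \<open>d = j\<close> by simp
        qed
        ultimately show "\<exists>c d. q = {c,d} \<and> (c,d) \<in> fr I \<and> c \<notin> placed h2 \<and> d \<notin> placed h2"
          using cd ph2 by blast
      qed
      show "(\<forall>x y. (x,y) \<in> fr I \<longrightarrow> x \<notin> placed h2 \<longrightarrow> {x,y} \<in> P - {p}) \<or> min (BA I As h2) (BPc I As h2) = 0"
        using inv4
      proof
        assume a4: "\<forall>x y. (x,y) \<in> fr I \<longrightarrow> x \<notin> placed h \<longrightarrow> {x,y} \<in> P"
        have "{x,y} \<in> P - {p}" if "(x,y) \<in> fr I" "x \<notin> placed h2" for x y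
        proof -
          have "x \<notin> placed h" "x \<noteq> i" "x \<noteq> j" using that ph2 by auto
          then have "{x,y} \<in> P" "{x,y} \<noteq> p" using a4 that pij by auto
          then show ?thesis by simp
        qed
        then show ?thesis by blast
      next
        assume "min (BA I As h) (BPc I As h) = 0"
        then show ?thesis using BA_mono[of h "[(i,v),(j,w)]"] BPc_mono[of h "[(i,v),(j,w)]"]
          unfolding h2_def by linarith
      qed
    qed
    have IH: "Pot I As h2 \<le> 4 * (\<Sum>k\<in>agents I - placed h2. util I A k)"
      using Suc.IH[OF invn A2'] .
    have Ai: "A i = v" using run_keeps[OF A2', of i v] map_of_None[OF iph] unfolding h2_def
      by (simp add: map_add_def)
    have Aj: "A j = w" using run_keeps[OF A2', of j w] map_of_None[OF jph] ij unfolding h2_def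
      by (simp add: map_add_def)
    have ui: "phi I \<le> util I A i" using util_friend[OF Fi] vw Ai Aj by simp
    have uj: "phi I \<le> util I A j" using util_friend[OF Fj] vw adj_sym Ai Aj by simp
    have split: "agents I - placed h = insert i (insert j (agents I - placed h2))"
      using ph2 ia iph jph by auto
    have sumeq: "(\<Sum>k\<in>agents I - placed h. util I A k) = util I A i + util I A j + (\<Sum>k\<in>agents I - placed h2. util I A k)"
      unfolding split using ij ph2 fin_agents by (simp add: sum.insert_if)
    have d1: "VA I As h \<le> VA I As h2 + 4" using VA_drop[of h "[(i,v),(j,w)]"] unfolding h2_def by simp
    have d2: "BA I As h \<le> BA I As h2 + 2" using BA_drop[OF fij, of "[(i,v),(j,w)]" h] unfolding h2_def by simp
    have d3: "BPc I As h \<le> BPc I As h2 + 4" using BPc_drop[of h "[(i,v),(j,w)]"] unfolding h2_def by simp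
    have "min (BA I As h) (BPc I As h) \<le> min (BA I As h2) (BPc I As h2) + 4"
      using d2 d3 by (intro min_drop) linarith+
    then have "real (min (BA I As h) (BPc I As h)) \<le> real (min (BA I As h2) (BPc I As h2)) + 4" by linarith
    then have "phi I * real (min (BA I As h) (BPc I As h)) \<le> phi I * real (min (BA I As h2) (BPc I As h2)) + phi I * 4"
      using phi_pos by (metis distrib_left mult_left_mono less_imp_le)
    then have "Pot I As h \<le> Pot I As h2 + 4 + 4 * phi I" using d1 unfolding Pot_def by linarith
    then show ?thesis using IH sumeq ui uj phi1 by linarith
  next
    case False
    have m0: "min (BA I As h) (BPc I As h) = 0" using else_min0[OF inv False] .
    show ?thesis
    proof (cases "Cset I h = {}")
      case True
      have "A = Defs.complete \<pi> h" using Suc.prems(2) unfolding run_stop[OF False True] by simp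
      have "Pot I As h \<le> 0" using Pot_stop[OF m0 True] .
      then show ?thesis using sum_nn[of "agents I - placed h"] by linarith
    next
      case C: False
      have fC: "finite (Cset I h)" unfolding Cset_def using fin_agents by auto
      from Suc.prems(2) obtain i where iC: "i \<in> Cset I h" and A2: "A \<in> set_pmf (run I \<pi> n (h @ [(i, pr \<pi> h i)]) {})"
        unfolding run_rsd[OF False C] using set_pmf_of_set[OF C fC] by auto
      from iC obtain u where ia: "i \<in> agents I" and iph: "i \<notin> placed h" and u: "u \<in> free I h" "0 < val I i u"
        unfolding Cset_def by auto
      have u1: "val I i u = 1" using val01[of i u] u by auto
      define v where "v = pr \<pi> h i"
      define h2 where "h2 = h @ [(i,v)]"
      have "BR I h i \<noteq> {}" using BR_ne u by auto
      then have vBR: "v \<in> BR I h i" using um unfolding utility_maximizing_def v_def by auto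
      have "pval I h i u \<le> pval I h i v" using vBR u unfolding BR_def by auto
      moreover have "val I i u \<le> pval I h i u" unfolding pval_def using phi_pos by simp
      ultimately have pv: "1 \<le> pval I h i v" using u1 by linarith
      have A2': "A \<in> set_pmf (run I \<pi> n h2 {})" using A2 unfolding h2_def v_def .
      have ph2: "placed h2 = insert i (placed h)" unfolding h2_def by auto
      have invn: "Inv I As n h2 {}"
        unfolding Inv_def
      proof (intro conjI)
        show "placed h2 \<subseteq> agents I" using ph2 inv1 ia by auto
        have "card (placed h2) = Suc (card (placed h))" unfolding ph2 by (rule card_insert_disjoint[OF fin_placed iph])
        then show "card (agents I) \<le> card (placed h2) + n" using inv2 by linarith
        show "\<forall>p\<in>{}. \<exists>a b. p = {a,b} \<and> (a,b) \<in> fr I \<and> a \<notin> placed h2 \<and> b \<notin> placed h2" by simp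
        show "(\<forall>x y. (x,y) \<in> fr I \<longrightarrow> x \<notin> placed h2 \<longrightarrow> {x,y} \<in> {}) \<or> min (BA I As h2) (BPc I As h2) = 0"
          using m0 BA_mono[of h "[(i,v)]"] BPc_mono[of h "[(i,v)]"] unfolding h2_def by linarith
      qed
      have IH: "Pot I As h2 \<le> 4 * (\<Sum>k\<in>agents I - placed h2. util I A k)"
        using Suc.IH[OF invn A2'] .
      have agree: "A k = w" if "map_of h k = Some w" for k w
        using run_keeps[OF A2'] agree_app[OF that] unfolding h2_def by blast
      have Ai: "A i = v" using run_keeps[OF A2', of i v] map_of_None[OF iph] unfolding h2_def
        by (simp add: map_add_def)
      have ui: "1 \<le> util I A i" using util_pval[of h A i v, OF agree Ai] pv by linarith
      have split: "agents I - placed h = insert i (agents I - placed h2)" using ph2 ia iph by auto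
      have sumeq: "(\<Sum>k\<in>agents I - placed h. util I A k) = util I A i + (\<Sum>k\<in>agents I - placed h2. util I A k)"
        unfolding split using ph2 fin_agents by (simp add: sum.insert_if)
      have d1: "VA I As h \<le> VA I As h2 + 2" using VA_drop[of h "[(i,v)]"] unfolding h2_def by simp
      have "Pot I As h = VA I As h" unfolding Pot_def m0 by simp
      then show ?thesis using d1 Pot_ge_VA[of h2] IH sumeq ui by linarith
    qed
  qed
qed

end

context Sctx begin

lemma tr_some: "(i,j) \<in> fr I \<Longrightarrow> truthful_report I i = Some j"
  unfolding truthful_report_def using fr_uniq by (auto intro!: the_equality)

lemma tr_some_rev: "truthful_report I i = Some j \<Longrightarrow> (i,j) \<in> fr I"
proof -
  assume a: "truthful_report I i = Some j"
  then have ex: "\<exists>k. (i,k) \<in> fr I" unfolding truthful_report_def by (auto split: if_splits)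
  then obtain k where k: "(i,k) \<in> fr I" by blast
  then have "truthful_report I i = Some k" by (rule tr_some)
  then show ?thesis using a k by simp
qed

lemma SW_restrict: "SW I A = SW I (restrict A (agents I))"
  unfolding SW_def util_def
proof (rule sum.cong[OF refl])
  fix i assume i: "i \<in> agents I"
  have "\<And>j. (i,j) \<in> fr I \<Longrightarrow> j \<in> agents I" using fr_sub by auto
  then show "val I i (A i) + (\<Sum>j\<in>{j. (i, j) \<in> fr I}. phi I * (if adj I (A i) (A j) then 1 else 0)) =
    val I i (restrict A (agents I) i) + (\<Sum>j\<in>{j. (i, j) \<in> fr I}. phi I * (if adj I (restrict A (agents I) i) (restrict A (agents I) j) then 1 else 0))"
    using i by (intro arg_cong2[where f="(+)"] sum.cong) auto
qed

lemma OPT_attained: "\<exists>As. bij_betw As (agents I) (plots I) \<and> SW I As = OPT I"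
proof -
  have cd: "card (agents I) = card (plots I)" using wf unfolding wf_inst_def by (elim conjE)
  obtain f where "bij_betw f (agents I) (plots I)"
    using finite_same_card_bij[OF fin_agents fin_plots cd] by blast
  then have ne: "allocations I \<noteq> {}" unfolding allocations_def by auto
  have "SW I ` allocations I \<subseteq> SW I ` (PiE (agents I) (\<lambda>_. plots I))"
  proof
    fix x assume "x \<in> SW I ` allocations I"
    then obtain A where A: "bij_betw A (agents I) (plots I)" "x = SW I A" unfolding allocations_def by auto
    then have "restrict A (agents I) \<in> PiE (agents I) (\<lambda>_. plots I)"
      using bij_betw_apply[OF A(1)] by (simp add: restrict_PiE_iff)
    then show "x \<in> SW I ` (PiE (agents I) (\<lambda>_. plots I))" using A SW_restrict by blast
  qed
  moreover have "finite (PiE (agents I) (\<lambda>_. plots I))" using fin_agents fin_plots by (simp add: finite_PiE)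
  ultimately have fin: "finite (SW I ` allocations I)" using finite_subset by blast
  have "OPT I \<in> SW I ` allocations I" unfolding OPT_def using Max_in[OF fin] ne by simp
  then show ?thesis unfolding allocations_def by auto
qed

lemma util_le: "util I A i \<le> 1 + phi I * real (card {j. (i,j) \<in> fr I})"
proof -
  have "(\<Sum>j\<in>{j. (i, j) \<in> fr I}. phi I * (if adj I (A i) (A j) then 1 else 0)) \<le> (\<Sum>j\<in>{j. (i, j) \<in> fr I}. phi I)"
    by (rule sum_mono) (use phi_pos in auto)
  also have "\<dots> = phi I * real (card {j. (i,j) \<in> fr I})" by simp
  finally show ?thesis unfolding util_def using val_le1[of i "A i"] by linarith
qed

end

context Sopt begin

lemma Pot_init: "Pot I As [] = SW I As"
proof -
  have pl: "placed [] = {}" unfolding placed_def by simp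
  have fr0: "free I [] = plots I" unfolding free_def by simp
  have al: "alive I As [] = agents I" unfolding alive_def pl fr0 using As_rng by auto
  have BA0: "BA I As [] = card (BPs I As)" unfolding BA_def pl by simp
  have BP0: "BPc I As [] = card (BPs I As)" unfolding BPc_def fr0
  proof -
    have "{(x, y). (x, y) \<in> BPs I As \<and> As x \<in> plots I \<and> As y \<in> plots I} = BPs I As"
      unfolding BPs_def using fr_sub As_rng by auto
    then show "card {(x, y). (x, y) \<in> BPs I As \<and> As x \<in> plots I \<and> As y \<in> plots I} = card (BPs I As)" by simp
  qed
  have inner: "(\<Sum>j\<in>{j. (i, j) \<in> fr I}. phi I * (if adj I (As i) (As j) then 1 else 0))
      = phi I * real (card {j. (i,j) \<in> fr I \<and> adj I (As i) (As j)})" for i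
  proof -
    have "(\<Sum>j\<in>{j. (i, j) \<in> fr I}. (if adj I (As i) (As j) then 1 else 0)) = (\<Sum>j\<in>{j \<in> {j. (i, j) \<in> fr I}. adj I (As i) (As j)}. (1::real))"
      using sum.inter_filter[OF fin_friends[of i], of "\<lambda>_. (1::real)" "\<lambda>j. adj I (As i) (As j)"] by simp
    also have "\<dots> = real (card {j. (i,j) \<in> fr I \<and> adj I (As i) (As j)})" by simp
    finally show ?thesis by (simp add: sum_distrib_left[symmetric])
  qed
  have sig: "Sigma (agents I) (\<lambda>i. {j. (i,j) \<in> fr I \<and> adj I (As i) (As j)}) = BPs I As"
    unfolding BPs_def using fr_sub by auto
  have "card (BPs I As) = (\<Sum>i\<in>agents I. card {j. (i,j) \<in> fr I \<and> adj I (As i) (As j)})"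
    unfolding sig[symmetric] by (rule card_SigmaI[OF fin_agents]) (use fin_friends in auto)
  then have "real (card (BPs I As)) = (\<Sum>i\<in>agents I. real (card {j. (i,j) \<in> fr I \<and> adj I (As i) (As j)}))"
    by simp
  then have "SW I As = (\<Sum>i\<in>agents I. val I i (As i)) + phi I * real (card (BPs I As))"
    unfolding SW_def util_def inner by (simp add: sum.distrib sum_distrib_left)
  then show ?thesis unfolding Pot_def VA_def al BA0 BP0 by simp
qed

lemma Inv_init: "Inv I As (card (agents I)) [] (mutual_pairs I (truthful_report I))"
  unfolding Inv_def
proof (intro conjI)
  have pl: "placed [] = {}" unfolding placed_def by simp
  show "placed [] \<subseteq> agents I" unfolding pl by simp
  show "card (agents I) \<le> card (placed []) + card (agents I)" by simp
  show "\<forall>p\<in>mutual_pairs I (truthful_report I). \<exists>a b. p = {a, b} \<and> (a, b) \<in> fr I \<and> a \<notin> placed [] \<and> b \<notin> placed []"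
    unfolding mutual_pairs_def pl using tr_some_rev by blast
  have "{x,y} \<in> mutual_pairs I (truthful_report I)" if "(x,y) \<in> fr I" for x y
  proof -
    have "x \<in> agents I" "y \<in> agents I" using that fr_sub by auto
    moreover have "x \<noteq> y" using that fr_irr by auto
    moreover have "truthful_report I x = Some y" using tr_some that by blast
    moreover have "truthful_report I y = Some x" using tr_some fr_sym that by blast
    ultimately show ?thesis unfolding mutual_pairs_def by blast
  qed
  then show "(\<forall>x y. (x, y) \<in> fr I \<longrightarrow> x \<notin> placed [] \<longrightarrow> {x, y} \<in> mutual_pairs I (truthful_report I)) \<or>
    min (BA I As []) (BPc I As []) = 0" by blast
qed

lemma final_bound: "A \<in> set_pmf (FF_CT_RSD I (truthful_report I) \<pi>) \<Longrightarrow> SW I As \<le> 4 * SW I A"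
proof -
  assume "A \<in> set_pmf (FF_CT_RSD I (truthful_report I) \<pi>)"
  then have a: "A \<in> set_pmf (run I \<pi> (card (agents I)) [] (mutual_pairs I (truthful_report I)))"
    unfolding FF_CT_RSD_def .
  have "Pot I As [] \<le> 4 * (\<Sum>i\<in>agents I - placed ([]::('a,'v) hist). util I A i)"
    by (rule main[OF Inv_init a])
  then show ?thesis unfolding Pot_init SW_def placed_def by simp
qed

end

theorem theorem5p2:
  fixes I :: "('a, 'v) inst" and \<pi> :: "('a, 'v) policy"
  assumes "wf_inst I"
    and "binary I"
    and "phi I > 1"
    and "max_degree_one I"
    and "utility_maximizing I \<pi>"
  shows "measure_pmf.expectation (FF_CT_RSD I (truthful_report I) \<pi>) (SW I) \<ge> OPT I / 4"
proof -
  have dg: "\<forall>i\<in>agents I. card {j. (i,j) \<in> fr I} \<le> 1"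
    using assms(4) unfolding max_degree_one_def by (elim conjE)
  interpret Sctx I \<pi>
    by (rule Sctx.intro[OF assms(1) assms(2) assms(3) dg assms(5)])
  obtain As where As: "bij_betw As (agents I) (plots I)" "SW I As = OPT I"
    using OPT_attained by blast
  have inj: "inj_on As (agents I)" using bij_betw_imp_inj_on[OF As(1)] .
  have rng: "As ` agents I \<subseteq> plots I" using bij_betw_imp_surj_on[OF As(1)] by simp
  interpret Sopt I \<pi> As
    by (rule Sopt.intro[OF Sctx_axioms Sopt_axioms.intro[OF inj rng]])
  define M where "M = FF_CT_RSD I (truthful_report I) \<pi>"
  define K where "K = (\<Sum>i\<in>agents I. 1 + phi I * real (card {j. (i,j) \<in> fr I}))"
  have bnd: "norm (SW I A) \<le> K" for A
  proof -
    have "0 \<le> SW I A" unfolding SW_def by (intro sum_nonneg util_nn)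
    moreover have "SW I A \<le> K" unfolding SW_def K_def by (intro sum_mono util_le)
    ultimately show ?thesis by simp
  qed
  have int: "integrable (measure_pmf M) (SW I)"
    by (rule measure_pmf.integrable_const_bound[where B=K]) (use bnd in auto)
  have AE: "AE A in measure_pmf M. OPT I / 4 \<le> SW I A"
  proof (rule AE_pmfI)
    fix y assume "y \<in> set_pmf M"
    then have "SW I As \<le> 4 * SW I y" using final_bound unfolding M_def by blast
    then show "OPT I / 4 \<le> SW I y" using As(2) by linarith
  qed
  have "OPT I / 4 \<le> measure_pmf.expectation M (SW I)"
    by (rule measure_pmf.integral_ge_const[OF int AE])
  then show ?thesis unfolding M_def .
qed

end
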